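(* Let $\mathbf{A}\in\mathbb{R}^{m\times n}$ with $m<n$, let $\mathbf{x}^*=(x_1^*,\dots,x_n^* )^T\in\mathbb{R}^n$, let $\mathbf{y}=\mathbf{A}\mathbf{x}^*$, and let $\mathbf{T}\subseteq\{1,\dots,n\}$ be arbitrary (it may contain indices outside the support of $\mathbf{x}^*$). Let $\mathbf{N}=\{j: x_j^*\neq 0\}$, $\mathbf{T}^c=\{1,\dots,n\}\setminus\mathbf{T}$, $\boldsymbol{\Delta}=\mathbf{N}\setminus\mathbf{T}$, and let $\mathbf{F}$ be the family of all subsets of $\boldsymbol{\Delta}$ (including $\emptyset$ and $\boldsymbol{\Delta}$). Then $\mathbf{x}^*$ is the unique solution of $$\min_{\mathbf{x}\in\mathbb{R}^n}\ \|\mathbf{x}_{\mathbf{T}^c}\|_1\quad\text{s.t.}\quad \mathbf{y}=\mathbf{A}\mathbf{x}$$ if and only if for every $\mathbf{I}\in\mathbf{F}$ and every $\boldsymbol{\delta}=(\delta_1,\dots,\delta_n)^T\in\mathbb{R}^n$ satisfying $$\mathbf{A}\boldsymbol{\delta}=\mathbf{0},\quad \|\boldsymbol{\delta}\|_1=1,\quad \delta_k x_k^*>0\ \text{for } k\in\mathbf{I},\quad \delta_k x_k^*\le 0\ \text{for } k\in\boldsymbol{\Delta}\setminus\mathbf{I},$$ one has $$\sum_{k\in\mathbf{T}^c\setminus\mathbf{I}}|\delta_k|-\sum_{k\in\mathbf{I}}|\delta_k|>0.$$ (Equivalently: for each $\mathbf{I}\in\mathbf{F}$ for which this constraint set is nonempty,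 the objective $\sum_{k\in\mathbf{T}^c\setminus\mathbf{I}}|\delta_k|-\sum_{k\in\mathbf{I}}|\delta_k|$ is strictly positive on the whole constraint set.)
   Context: For $\mathbf{x}\in\mathbb{R}^n$ and an index set $\mathbf{S}\subseteq\{1,\dots,n\}$, $\mathbf{x}_{\mathbf{S}}$ denotes the vector of entries of $\mathbf{x}$ with indices in $\mathbf{S}$. The optimization problem $\min\|\mathbf{x}_{\mathbf{T}^c}\|_1$ s.t. $\mathbf{y}=\mathbf{A}\mathbf{x}$ is called modified-CS, and $\mathbf{T}$ is the "known part" of the support. *)

theory Defs
  imports "HOL-Analysis.Analysis"
begin

text \<open>Vectors in R^n are functions nat => real vanishing outside {..<n}
  (indices 0..n-1); an m x n matrix is a function nat => nat => real
  read on {..<m} x {..<n}.\<close>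

definition vec_on :: "nat \<Rightarrow> (nat \<Rightarrow> real) \<Rightarrow> bool" where
  "vec_on n x \<longleftrightarrow> (\<forall>j\<ge>n. x j = 0)"

definition matvec :: "nat \<Rightarrow> (nat \<Rightarrow> nat \<Rightarrow> real) \<Rightarrow> (nat \<Rightarrow> real) \<Rightarrow> nat \<Rightarrow> real" where
  "matvec n A x = (\<lambda>i. \<Sum>j<n. A i j * x j)"

definition l1_on :: "nat set \<Rightarrow> (nat \<Rightarrow> real) \<Rightarrow> real" where
  "l1_on S x = (\<Sum>k\<in>S. \<bar>x k\<bar>)"

definition modcs_unique_sol ::
  "nat \<Rightarrow> nat \<Rightarrow> (nat \<Rightarrow> nat \<Rightarrow> real) \<Rightarrow> (nat \<Rightarrow> real) \<Rightarrow> nat set \<Rightarrow> (nat \<Rightarrow> real) \<Rightarrow> bool" where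
  "modcs_unique_sol m n A y T x \<longleftrightarrow>
     vec_on n x \<and> (\<forall>i<m. matvec n A x i = y i) \<and>
     (\<forall>z. vec_on n z \<and> (\<forall>i<m. matvec n A z i = y i) \<and> z \<noteq> x \<longrightarrow>
        l1_on ({..<n} - T) x < l1_on ({..<n} - T) z)"

end

theory Submission
  imports Defs
begin

lemma c1: fixes x d t :: real assumes "d*x \<le> 0" "t \<ge> 0" shows "\<bar>x - t*d\<bar> = \<bar>x\<bar> + t*\<bar>d\<bar>"
proof (cases "d \<ge> 0")
  case True
  then have "x \<le> 0 \<or> d = 0" using assms(1) by (auto simp: mult_le_0_iff)
  moreover have "t*d \<ge> 0" using True assms by simp
  ultimately show ?thesis using True by auto
next
  case False
  then have "x \<ge> 0" using assms(1) by (auto simp: mult_le_0_iff)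
  moreover have "t*d \<le> 0" using False assms by (simp add: mult_nonneg_nonpos)
  ultimately show ?thesis using False by auto
qed

lemma c2: fixes x d t :: real assumes "d*x > 0" "t \<ge> 0" "t*\<bar>d\<bar> \<le> \<bar>x\<bar>" shows "\<bar>x - t*d\<bar> = \<bar>x\<bar> - t*\<bar>d\<bar>"
proof (cases "d > 0")
  case True
  then have "x > 0" using assms(1) by (auto simp: zero_less_mult_iff)
  then show ?thesis using True assms by auto
next
  case False
  then have "x < 0" "d < 0" using assms(1) by (auto simp: zero_less_mult_iff)
  then show ?thesis using assms by auto
qed

lemma matvec_lin: "matvec n A (\<lambda>k. x k - t * d k) i = matvec n A x i - t * matvec n A d i"
  unfolding matvec_def by (simp add: sum_subtractf sum_distrib_left algebra_simps)

lemma l1_split: assumes "B \<subseteq> S" "finite S"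
  shows "l1_on S x = l1_on (S - B) x + l1_on B x"
  unfolding l1_on_def using assms by (simp add: sum.subset_diff[of B S])

theorem theorem1:
  fixes m n :: nat and A :: "nat \<Rightarrow> nat \<Rightarrow> real" and xs :: "nat \<Rightarrow> real"
    and T :: "nat set"
  assumes "m < n"
    and "vec_on n xs"
    and "T \<subseteq> {..<n}"
  shows "modcs_unique_sol m n A (matvec n A xs) T xs \<longleftrightarrow>
    (\<forall>I \<subseteq> {j\<in>{..<n}. xs j \<noteq> 0} - T. \<forall>\<delta>.
       vec_on n \<delta> \<and> (\<forall>i<m. matvec n A \<delta> i = 0) \<and> l1_on {..<n} \<delta> = 1 \<and>
       (\<forall>k\<in>I. \<delta> k * xs k > 0) \<and>
       (\<forall>k\<in>({j\<in>{..<n}. xs j \<noteq> 0} - T) - I. \<delta> k * xs k \<le> 0)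
       \<longrightarrow> l1_on (({..<n} - T) - I) \<delta> - l1_on I \<delta> > 0)"
  (is "?L \<longleftrightarrow> ?R")
proof
  define Tc where "Tc = {..<n} - T"
  define D where "D = {j\<in>{..<n}. xs j \<noteq> 0} - T"
  have finTc: "finite Tc" unfolding Tc_def by simp
  assume U: ?L
  show ?R
  proof (intro allI impI)
    fix I \<delta>
    assume ID: "I \<subseteq> {j\<in>{..<n}. xs j \<noteq> 0} - T"
    assume H: "vec_on n \<delta> \<and> (\<forall>i<m. matvec n A \<delta> i = 0) \<and> l1_on {..<n} \<delta> = 1 \<and>
       (\<forall>k\<in>I. \<delta> k * xs k > 0) \<and>
       (\<forall>k\<in>({j\<in>{..<n}. xs j \<noteq> 0} - T) - I. \<delta> k * xs k \<le> 0)"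
    have ITc: "I \<subseteq> Tc" using ID unfolding Tc_def by auto
    have finI: "finite I" using ITc finTc finite_subset by blast
    define t where "t = Min (insert 1 ((\<lambda>k. \<bar>xs k\<bar>) ` I))"
    have tpos: "t > 0" unfolding t_def using finI ID by (subst Min_gr_iff) auto
    have tle: "t \<le> \<bar>xs k\<bar>" if "k \<in> I" for k
      unfolding t_def using finI that by (intro Min_le) auto
    have dle: "\<bar>\<delta> k\<bar> \<le> 1" if "k < n" for k
    proof -
      have "\<bar>\<delta> k\<bar> \<le> l1_on {..<n} \<delta>" unfolding l1_on_def
        using that by (intro member_le_sum) auto
      then show ?thesis using H by simp
    qed
    define z where "z = (\<lambda>k. xs k - t * \<delta> k)"
    have vz: "vec_on n z" using H assms(2) unfolding vec_on_def z_def by auto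
    have fz: "\<forall>i<m. matvec n A z i = matvec n A xs i"
      using H unfolding z_def by (simp add: matvec_lin)
    obtain k where k: "k < n" "\<delta> k \<noteq> 0"
    proof -
      have "\<exists>k<n. \<delta> k \<noteq> 0"
      proof (rule ccontr)
        assume "\<not> ?thesis"
        then have "l1_on {..<n} \<delta> = 0" unfolding l1_on_def by simp
        then show False using H by simp
      qed
      then show ?thesis using that by blast
    qed
    have "z k \<noteq> xs k" using k tpos unfolding z_def by simp
    then have "z \<noteq> xs" by auto
    have Uq: "\<forall>z. vec_on n z \<and> (\<forall>i<m. matvec n A z i = matvec n A xs i) \<and> z \<noteq> xs \<longrightarrow>
        l1_on ({..<n} - T) xs < l1_on ({..<n} - T) z"
      using U unfolding modcs_unique_sol_def by (elim conjE)
    have lt: "l1_on Tc xs < l1_on Tc z" unfolding Tc_def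
      using \<open>z \<noteq> xs\<close> vz fz by (intro Uq[rule_format] conjI)
    have e1: "\<bar>z k\<bar> = \<bar>xs k\<bar> + t * \<bar>\<delta> k\<bar>" if "k \<in> Tc - I" for k
    proof -
      have "\<delta> k * xs k \<le> 0"
      proof (cases "xs k = 0")
        case True then show ?thesis by simp
      next
        case False then show ?thesis using H that unfolding Tc_def by auto
      qed
      then show ?thesis unfolding z_def using tpos by (intro c1) auto
    qed
    have e2: "\<bar>z k\<bar> = \<bar>xs k\<bar> - t * \<bar>\<delta> k\<bar>" if "k \<in> I" for k
    proof -
      have kn: "k < n" using that ID by auto
      have "t * \<bar>\<delta> k\<bar> \<le> t * 1" using dle[OF kn] tpos by (intro mult_left_mono) auto
      also have "\<dots> \<le> \<bar>xs k\<bar>" using tle[OF that] by simp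
      finally show ?thesis unfolding z_def using tpos H that by (intro c2) auto
    qed
    have "l1_on Tc z = l1_on (Tc - I) z + l1_on I z" by (rule l1_split[OF ITc finTc])
    also have "\<dots> = (\<Sum>k\<in>Tc - I. \<bar>xs k\<bar> + t * \<bar>\<delta> k\<bar>) + (\<Sum>k\<in>I. \<bar>xs k\<bar> - t * \<bar>\<delta> k\<bar>)"
      unfolding l1_on_def using e1 e2 by simp
    also have "\<dots> = l1_on Tc xs + t * (l1_on (Tc - I) \<delta> - l1_on I \<delta>)"
      using l1_split[OF ITc finTc, of xs] unfolding l1_on_def
      by (simp add: sum.distrib sum_subtractf sum_distrib_left algebra_simps)
    finally have "t * (l1_on (Tc - I) \<delta> - l1_on I \<delta>) > 0" using lt by simp
    then show "l1_on (({..<n} - T) - I) \<delta> - l1_on I \<delta> > 0"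
      using tpos unfolding Tc_def by (simp add: zero_less_mult_iff)
  qed
next
  define Tc where "Tc = {..<n} - T"
  have finTc: "finite Tc" unfolding Tc_def by simp
  assume R: ?R
  show ?L unfolding modcs_unique_sol_def
  proof (intro conjI allI impI)
    show "vec_on n xs" by (rule assms(2))
    show "\<And>i. i < m \<Longrightarrow> matvec n A xs i = matvec n A xs i" by simp
    fix z assume Z: "vec_on n z \<and> (\<forall>i<m. matvec n A z i = matvec n A xs i) \<and> z \<noteq> xs"
    define \<delta> where "\<delta> = (\<lambda>k. xs k - z k)"
    have vd: "vec_on n \<delta>" using Z assms(2) unfolding vec_on_def \<delta>_def by auto
    have md: "\<forall>i<m. matvec n A \<delta> i = 0"
      using Z matvec_lin[of n A xs 1 z] unfolding \<delta>_def by simp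
    have "\<exists>k. \<delta> k \<noteq> 0"
    proof (rule ccontr)
      assume "\<not> ?thesis"
      then have "\<And>k. z k = xs k" unfolding \<delta>_def by simp
      then have "z = xs" by (rule ext)
      then show False using Z by simp
    qed
    then obtain k where k: "\<delta> k \<noteq> 0" by blast
    have kn: "k < n" using k vd unfolding vec_on_def by (meson not_le)
    define c where "c = l1_on {..<n} \<delta>"
    have "\<bar>\<delta> k\<bar> \<le> c" unfolding c_def l1_on_def using kn by (intro member_le_sum) auto
    then have cpos: "c > 0" using k by linarith
    define \<delta>' where "\<delta>' = (\<lambda>k. \<delta> k / c)"
    define I where "I = {k \<in> {j\<in>{..<n}. xs j \<noteq> 0} - T. \<delta> k * xs k > 0}"
    have l1d': "l1_on S \<delta>' = l1_on S \<delta> / c" for S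
      unfolding l1_on_def \<delta>'_def using cpos by (simp add: sum_divide_distrib)
    have "vec_on n \<delta>'" using vd unfolding vec_on_def \<delta>'_def by simp
    moreover have "\<forall>i<m. matvec n A \<delta>' i = 0"
      using md unfolding matvec_def \<delta>'_def by (simp add: sum_divide_distrib[symmetric])
    moreover have "l1_on {..<n} \<delta>' = 1" using l1d' cpos c_def by simp
    moreover have "\<forall>k\<in>I. \<delta>' k * xs k > 0"
      unfolding I_def \<delta>'_def using cpos by (auto simp: divide_pos_pos)
    moreover have "\<forall>k\<in>({j\<in>{..<n}. xs j \<noteq> 0} - T) - I. \<delta>' k * xs k \<le> 0"
    proof
      fix k assume "k \<in> ({j\<in>{..<n}. xs j \<noteq> 0} - T) - I"
      then have "\<delta> k * xs k \<le> 0" unfolding I_def by auto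
      then have "(\<delta> k * xs k) / c \<le> 0" using cpos by (simp add: divide_nonpos_pos)
      then show "\<delta>' k * xs k \<le> 0" unfolding \<delta>'_def by simp
    qed
    moreover have Isub: "I \<subseteq> {j\<in>{..<n}. xs j \<noteq> 0} - T" unfolding I_def by auto
    ultimately have "l1_on (({..<n} - T) - I) \<delta>' - l1_on I \<delta>' > 0"
      by (intro R[rule_format, OF Isub] conjI)
    then have "(l1_on (Tc - I) \<delta> - l1_on I \<delta>) / c > 0"
      unfolding l1d' Tc_def by (simp add: diff_divide_distrib)
    then have pos: "l1_on (Tc - I) \<delta> - l1_on I \<delta> > 0" using cpos by (simp add: zero_less_divide_iff)
    have ITc: "I \<subseteq> Tc" unfolding I_def Tc_def by auto
    have zeq: "z k = xs k - 1 * \<delta> k" for k unfolding \<delta>_def by simp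
    have e1: "\<bar>z k\<bar> = \<bar>xs k\<bar> + \<bar>\<delta> k\<bar>" if "k \<in> Tc - I" for k
    proof -
      have "\<delta> k * xs k \<le> 0"
      proof (cases "xs k = 0")
        case True then show ?thesis by simp
      next
        case False then show ?thesis using that unfolding Tc_def I_def by auto
      qed
      then show ?thesis using c1[of "\<delta> k" "xs k" 1] zeq by simp
    qed
    have e2: "\<bar>z k\<bar> \<ge> \<bar>xs k\<bar> - \<bar>\<delta> k\<bar>" for k unfolding \<delta>_def by linarith
    have "l1_on Tc xs + (l1_on (Tc - I) \<delta> - l1_on I \<delta>) =
        (\<Sum>k\<in>Tc - I. \<bar>xs k\<bar> + \<bar>\<delta> k\<bar>) + (\<Sum>k\<in>I. \<bar>xs k\<bar> - \<bar>\<delta> k\<bar>)"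
      using l1_split[OF ITc finTc, of xs] unfolding l1_on_def
      by (simp add: sum.distrib sum_subtractf algebra_simps)
    also have "\<dots> \<le> l1_on (Tc - I) z + l1_on I z"
      unfolding l1_on_def using e1 e2 by (intro add_mono sum_mono) auto
    also have "\<dots> = l1_on Tc z" by (rule l1_split[OF ITc finTc, symmetric])
    finally show "l1_on ({..<n} - T) xs < l1_on ({..<n} - T) z" using pos unfolding Tc_def by simp
  qed
qed

end
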